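(* Let $R$ be an associative ring with identity which is left quasi-morphic. Then $R$ is left uniquely generated if and only if $R$ has stable range one.
   Context: For $a \in R$, $\operatorname{ann}_l(a) = \{r \in R : ra = 0\}$. $R$ is left quasi-morphic if the set of principal left ideals $\{Ra : a \in R\}$ coincides with the set of left annihilators $\{\operatorname{ann}_l(b) : b \in R\}$. $R$ is left uniquely generated if for all $a, b \in R$ with $Ra = Rb$ there exists a unit $u$ of $R$ with $a = ub$. $R$ has stable range one if whenever $a, b, x \in R$ satisfy $ax + b = 1$, there exists $y \in R$ such that $a + by$ is a unit of $R$. *)

theory Defs
  imports Main
begin

definition unit_of :: "'a::ring_1 \<Rightarrow> bool" where
  "unit_of u \<longleftrightarrow> (\<exists>v. u * v = 1 \<and> v * u = 1)"

definition principal_left :: "'a::ring_1 \<Rightarrow> 'a set" where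
  "principal_left a = {r * a | r. True}"

definition ann_l :: "'a::ring_1 \<Rightarrow> 'a set" where
  "ann_l a = {r. r * a = 0}"

definition left_quasi_morphic :: "'a::ring_1 itself \<Rightarrow> bool" where
  "left_quasi_morphic _ \<longleftrightarrow>
     range (principal_left :: 'a \<Rightarrow> 'a set) = range (ann_l :: 'a \<Rightarrow> 'a set)"

definition left_uniquely_generated :: "'a::ring_1 itself \<Rightarrow> bool" where
  "left_uniquely_generated _ \<longleftrightarrow>
     (\<forall>a b :: 'a. principal_left a = principal_left b \<longrightarrow> (\<exists>u. unit_of u \<and> a = u * b))"

definition stable_range_one :: "'a::ring_1 itself \<Rightarrow> bool" where
  "stable_range_one _ \<longleftrightarrow>
     (\<forall>a b x :: 'a. a * x + b = 1 \<longrightarrow> (\<exists>y. unit_of (a + b * y)))"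

end

theory Submission
  imports Defs
begin

lemma id1: "(a + y*(1 - x*a)) * (1 - x*y) = (1 - y*x) * (a + (1 - a*x)*y)"
  for a x y :: "'a::ring_1"
  by (simp add: algebra_simps)

lemma id2: "(1 - a*x) * (a + y*(1 - x*a)) = (a + (1 - a*x)*y) * (1 - x*a)"
  for a x y :: "'a::ring_1"
  by (simp add: algebra_simps)

lemma transfer_lr:
  fixes a x y :: "'a::ring_1"
  assumes "unit_of (a + (1 - a*x)*y)"
  shows "unit_of (a + y*(1 - x*a))"
proof -
  define p where "p = a + (1 - a*x)*y"
  define q where "q = a + y*(1 - x*a)"
  obtain v where v: "p*v = 1" "v*p = 1" using assms unfolding unit_of_def p_def by blast
  define w where "w = x + (1 - x*y)*v*(1 - a*x)"
  have "q*w = q*x + (q*(1 - x*y))*v*(1 - a*x)" unfolding w_def by (simp add: algebra_simps)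
  also have "\<dots> = q*x + (1 - y*x)*(p*v)*(1 - a*x)" using id1[of a y x] unfolding p_def q_def
    by (simp add: mult.assoc)
  also have "\<dots> = 1" using v(1) unfolding q_def by (simp add: algebra_simps)
  finally have 1: "q*w = 1" .
  have "w*q = x*q + (1 - x*y)*v*((1 - a*x)*q)" unfolding w_def by (simp add: algebra_simps)
  also have "\<dots> = x*q + (1 - x*y)*(v*p)*(1 - x*a)" using id2[of a x y] unfolding p_def q_def
    by (simp add: mult.assoc)
  also have "\<dots> = 1" using v(2) unfolding q_def by (simp add: algebra_simps)
  finally have 2: "w*q = 1" .
  show ?thesis using 1 2 unfolding unit_of_def q_def by blast
qed

lemma transfer_rl:
  fixes a x y :: "'a::ring_1"
  assumes "unit_of (a + y*(1 - x*a))"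
  shows "unit_of (a + (1 - a*x)*y)"
proof -
  define p where "p = a + (1 - a*x)*y"
  define q where "q = a + y*(1 - x*a)"
  obtain v where v: "q*v = 1" "v*q = 1" using assms unfolding unit_of_def q_def by blast
  define w where "w = x + (1 - x*a)*v*(1 - y*x)"
  have "p*w = p*x + (p*(1 - x*a))*v*(1 - y*x)" unfolding w_def by (simp add: algebra_simps)
  also have "\<dots> = p*x + (1 - a*x)*(q*v)*(1 - y*x)" using id2[of a x y] unfolding p_def q_def
    by (metis mult.assoc)
  also have "\<dots> = 1" using v(1) unfolding p_def by (simp add: algebra_simps)
  finally have 1: "p*w = 1" .
  have "w*p = x*p + (1 - x*a)*v*((1 - y*x)*p)" unfolding w_def by (simp add: algebra_simps)
  also have "\<dots> = x*p + (1 - x*a)*(v*q)*(1 - x*y)" using id1[of a y x] unfolding p_def q_def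
    by (simp add: mult.assoc)
  also have "\<dots> = 1" using v(2) unfolding p_def by (simp add: algebra_simps)
  finally have 2: "w*p = 1" .
  show ?thesis using 1 2 unfolding unit_of_def p_def by blast
qed

theorem theorem5:
  assumes "left_quasi_morphic TYPE('a::ring_1)"
  shows "left_uniquely_generated TYPE('a) \<longleftrightarrow> stable_range_one TYPE('a)"
proof
  assume L: "left_uniquely_generated TYPE('a)"
  show "stable_range_one TYPE('a)"
    unfolding stable_range_one_def
  proof (intro allI impI)
    fix a b x :: 'a
    assume abx: "a * x + b = 1"
    define B where "B = 1 - x*a"
    have "principal_left B \<in> range (ann_l :: 'a \<Rightarrow> 'a set)"
      using assms unfolding left_quasi_morphic_def by blast
    then obtain c :: 'a where c: "principal_left B = ann_l c" by blast
    have "B \<in> principal_left B" unfolding principal_left_def by (metis (mono_tags, lifting) mem_Collect_eq mult_1_left)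
    hence Bc: "B * c = 0" using c unfolding ann_l_def by auto
    hence xac: "x*(a*c) = c" unfolding B_def by (simp add: algebra_simps)
    have "principal_left (a*c) = principal_left c"
    proof
      show "principal_left (a*c) \<subseteq> principal_left c"
        unfolding principal_left_def by (auto simp: mult.assoc[symmetric])
      show "principal_left c \<subseteq> principal_left (a*c)"
        unfolding principal_left_def
      proof clarify
        fix r show "\<exists>s. r * c = s * (a*c) \<and> True"
          by (rule exI[of _ "r*x"]) (simp add: mult.assoc xac)
      qed
    qed
    then obtain u where u: "unit_of u" "a*c = u*c"
      using L unfolding left_uniquely_generated_def by blast
    have "(a - u) * c = 0" using u(2) by (simp add: algebra_simps)
    hence "a - u \<in> principal_left B" using c unfolding ann_l_def by simp
    then obtain r where r: "a - u = r * B" unfolding principal_left_def by blast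
    have "u = a + (-r)*(1 - x*a)" using r unfolding B_def by (simp add: algebra_simps)
    hence "unit_of (a + (-r)*(1 - x*a))" using u(1) by simp
    hence "unit_of (a + (1 - a*x)*(-r))" by (rule transfer_rl)
    moreover have "1 - a*x = b" using abx by (simp add: algebra_simps)
    ultimately show "\<exists>y. unit_of (a + b * y)" by metis
  qed
next
  assume S: "stable_range_one TYPE('a)"
  show "left_uniquely_generated TYPE('a)"
    unfolding left_uniquely_generated_def
  proof (intro allI impI)
    fix a b :: 'a
    assume eq: "principal_left a = principal_left b"
    have "a \<in> principal_left a" unfolding principal_left_def by (metis (mono_tags, lifting) mem_Collect_eq mult_1_left)
    hence "a \<in> principal_left b" using eq by simp
    then obtain s where s: "a = s*b" unfolding principal_left_def by blast
    have "b \<in> principal_left b" unfolding principal_left_def by (metis (mono_tags, lifting) mem_Collect_eq mult_1_left)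
    hence "b \<in> principal_left a" using eq by simp
    then obtain t where t: "b = t*a" unfolding principal_left_def by blast
    have "s * t + (1 - s*t) = 1" by simp
    then obtain y where "unit_of (s + (1 - s*t)*y)" using S unfolding stable_range_one_def by blast
    hence U: "unit_of (s + y*(1 - t*s))" by (rule transfer_lr)
    have "(1 - t*s)*b = 0" using s t by (simp add: algebra_simps mult.assoc)
    hence "(s + y*(1 - t*s)) * b = a" using s by (simp add: algebra_simps mult.assoc)
    thus "\<exists>u. unit_of u \<and> a = u * b" using U by metis
  qed
qed

end
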